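(* Let $n\ge1$, let $\mathcal X\subseteq\mathbb N^n$ be a finite Ferrers set, and let $\Pi:\mathcal X\to\mathbb R_{>0}$. Let $\tilde{\mathcal B}_{\mathcal X}$ be the set of functions $\Gamma:\mathcal X\to\mathbb R_{\ge0}$ that are componentwise non-increasing ($\Gamma(x)\ge\Gamma(x+e_i)$ whenever $x,x+e_i\in\mathcal X$) and satisfy $\sum_{x\in\mathcal X}\Pi(x)\Gamma(x)=1$. For each Ferrers subset $\mathcal A\subseteq\mathcal X$ define $\Gamma_{\mathcal A}(x)=\mathbf 1\{x\in\mathcal A\}/\sum_{y\in\mathcal A}\Pi(y)$. Then $\tilde{\mathcal B}_{\mathcal X}$ is the convex hull of $\{\Gamma_{\mathcal A}:\mathcal A\text{ a Ferrers subset of }\mathcal X\}$, and each such $\Gamma_{\mathcal A}$ is an extreme point of $\tilde{\mathcal B}_{\mathcal X}$.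
   Context: $e_i$ is the $i$-th unit vector of $\mathbb N^n$; $\le$ is componentwise. A set $\mathcal X\subseteq\mathbb N^n$ is a Ferrers set if $0\in\mathcal X$ and $x\in\mathcal X$, $y\in\mathbb N^n$, $y\le x$ imply $y\in\mathcal X$. *)

theory Defs
  imports "HOL-Analysis.Analysis" "HOL-Library.Function_Algebras"
begin

text \<open>Real-valued (more generally vector-valued) functions form a real vector space
  under pointwise operations; this lets us use the library notions
  convex hull and extreme_point_of for sets of functions.\<close>

instantiation "fun" :: (type, real_vector) real_vector
begin
definition scaleR_fun :: "real \<Rightarrow> ('a \<Rightarrow> 'b) \<Rightarrow> 'a \<Rightarrow> 'b"
  where "scaleR_fun c f = (\<lambda>x. c *\<^sub>R f x)"
instance
  by standard (auto simp: scaleR_fun_def fun_eq_iff scaleR_add_right scaleR_add_left)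
end

text \<open>Points of N^n are modelled as functions nat => nat vanishing outside {..<n}.\<close>
definition Nn :: "nat \<Rightarrow> (nat \<Rightarrow> nat) set" where
  "Nn n = {x. \<forall>i\<ge>n. x i = 0}"

definition unitv :: "nat \<Rightarrow> nat \<Rightarrow> nat" where
  "unitv i = (\<lambda>j. if j = i then 1 else 0)"

definition ferrers :: "nat \<Rightarrow> (nat \<Rightarrow> nat) set \<Rightarrow> bool" where
  "ferrers n X \<longleftrightarrow> X \<subseteq> Nn n \<and> 0 \<in> X \<and>
     (\<forall>x\<in>X. \<forall>y\<in>Nn n. y \<le> x \<longrightarrow> y \<in> X)"

definition Btilde :: "nat \<Rightarrow> (nat \<Rightarrow> nat) set \<Rightarrow> ((nat \<Rightarrow> nat) \<Rightarrow> real)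
    \<Rightarrow> (((nat \<Rightarrow> nat) \<Rightarrow> real) set)" where
  "Btilde n X Pw = {G. (\<forall>x. x \<notin> X \<longrightarrow> G x = 0) \<and> (\<forall>x\<in>X. 0 \<le> G x) \<and>
      (\<forall>x\<in>X. \<forall>i<n. x + unitv i \<in> X \<longrightarrow> G (x + unitv i) \<le> G x) \<and>
      (\<Sum>x\<in>X. Pw x * G x) = 1}"

definition GammaA :: "((nat \<Rightarrow> nat) \<Rightarrow> real) \<Rightarrow> (nat \<Rightarrow> nat) set \<Rightarrow> (nat \<Rightarrow> nat) \<Rightarrow> real" where
  "GammaA Pw A = (\<lambda>x. (if x \<in> A then 1 else 0) / (\<Sum>y\<in>A. Pw y))"

end

theory Submission
  imports Defs
begin

lemma sum_fun_apply: "(\<Sum>i\<in>I. f i) x = (\<Sum>i\<in>I. (f i) x)"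
  by (induction I rule: infinite_finite_induct) auto

lemma scaleR_fun_apply: "(c *\<^sub>R f) x = c * f x"
  by (simp add: scaleR_fun_def)

lemma mono_steps:
  assumes fX: "ferrers n X"
    and mon: "\<forall>x\<in>X. \<forall>i<n. x + unitv i \<in> X \<longrightarrow> G (x + unitv i) \<le> G x"
  shows "\<And>x. x \<in> X \<Longrightarrow> y \<in> X \<Longrightarrow> y \<le> x \<Longrightarrow> G x \<le> (G y :: real)"
proof -
  fix x assume "x \<in> X" "y \<in> X" "y \<le> x"
  then show "G x \<le> G y"
  proof (induction "\<Sum>j<n. x j" arbitrary: x rule: less_induct)
    case less
    have XN: "X \<subseteq> Nn n" and dc: "\<forall>x\<in>X. \<forall>y\<in>Nn n. y \<le> x \<longrightarrow> y \<in> X"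
      using fX by (auto simp: ferrers_def)
    show ?case
    proof (cases "x = y")
      case True then show ?thesis by simp
    next
      case False
      have xN: "x \<in> Nn n" "y \<in> Nn n" using less XN by auto
      obtain i where "x i \<noteq> y i" using False by (auto simp: fun_eq_iff)
      then have i: "y i < x i" using le_funD[OF less(4), of i] by linarith
      have "i < n" proof (rule ccontr)
        assume "\<not> i < n" then have "x i = 0" using xN by (simp add: Nn_def)
        then show False using i by simp
      qed
      define x' where "x' = x(i := x i - 1)"
      have x'le: "x' \<le> x" by (auto simp: x'_def le_fun_def)
      have x'N: "x' \<in> Nn n" using xN by (auto simp: Nn_def x'_def)
      have x'X: "x' \<in> X" using dc less(2) x'le x'N by blast
      have yx': "y \<le> x'" using less(4) i by (auto simp: x'_def le_fun_def)
      have eq: "x' + unitv i = x" using i by (auto simp: x'_def unitv_def fun_eq_iff)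
      have "G x \<le> G x'" using mon x'X \<open>i < n\<close> eq less(2) by metis
      moreover have "(\<Sum>j<n. x' j) < (\<Sum>j<n. x j)"
      proof -
        have "(\<Sum>j<n. x j) = (\<Sum>j<n. x' j + unitv i j)"
          by (metis eq plus_fun_apply)
        also have "\<dots> = (\<Sum>j<n. x' j) + 1" using \<open>i<n\<close>
          by (simp add: sum.distrib unitv_def)
        finally show ?thesis by simp
      qed
      then have "G x' \<le> G y" using less.hyps x'X less(3) yx' by blast
      ultimately show ?thesis by simp
    qed
  qed
qed

lemma telescope:
  fixes S :: "real set"
  assumes fin: "finite S" and pos: "S \<subseteq> {0<..}"
  shows "c \<in> S \<Longrightarrow> (\<Sum>v\<in>{v\<in>S. v \<le> c}. v - Max (insert 0 {w\<in>S. w<v})) = c"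
proof (induction "card {v\<in>S. v<c}" arbitrary: c rule: less_induct)
  case less
  have split: "{v\<in>S. v\<le>c} = insert c {v\<in>S. v<c}" using less by auto
  have finc: "finite {v\<in>S. v<c}" using fin by auto
  show ?case
  proof (cases "{v\<in>S. v<c} = {}")
    case True
    have e: "{v\<in>S. v\<le>c} = {c}" by (simp only: split True)
    show ?thesis by (simp add: e True)
  next
    case False
    define c' where "c' = Max {v\<in>S. v<c}"
    have c'in: "c' \<in> {v\<in>S. v<c}" using Max_in finc False c'_def by blast
    have c'pos: "c' > 0" using c'in pos by auto
    have nx: "Max (insert 0 {w\<in>S. w<c}) = c'"
      using Max_insert[OF finc False] c'pos c'_def by simp
    have eq2: "{v\<in>S. v<c} = {v\<in>S. v \<le> c'}"
      using c'in Max_ge[OF finc] c'_def by force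
    have "{v\<in>S. v<c'} \<subset> {v\<in>S. v<c}" using c'in by auto
    then have "card {v\<in>S. v<c'} < card {v\<in>S. v<c}" using psubset_card_mono finc by blast
    then have IH: "(\<Sum>v\<in>{v\<in>S. v \<le> c'}. v - Max (insert 0 {w\<in>S. w<v})) = c'"
      using less.hyps c'in by blast
    have "(\<Sum>v\<in>{v\<in>S. v \<le> c}. v - Max (insert 0 {w\<in>S. w<v}))
        = (c - c') + (\<Sum>v\<in>{v\<in>S. v<c}. v - Max (insert 0 {w\<in>S. w<v}))"
      using split finc nx by simp
    also have "\<dots> = c" using IH eq2 by simp
    finally show ?thesis .
  qed
qed

lemma gamma_in:
  assumes "finite X" "ferrers n X" "\<forall>x\<in>X. Pw x > 0" "A \<subseteq> X" "ferrers n A"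
  shows "GammaA Pw A \<in> Btilde n X Pw"
proof -
  have XN: "X \<subseteq> Nn n" using assms(2) by (simp add: ferrers_def)
  have finA: "finite A" using assms finite_subset by blast
  have "0 \<in> A" using assms(5) by (simp add: ferrers_def)
  then have P: "(\<Sum>y\<in>A. Pw y) > 0" using finA assms(3,4) by (intro sum_pos) auto
  have dcA: "\<forall>x\<in>A. \<forall>y\<in>Nn n. y \<le> x \<longrightarrow> y \<in> A" using assms(5) by (simp add: ferrers_def)
  have mon: "x + unitv i \<in> A \<Longrightarrow> x \<in> X \<Longrightarrow> x \<in> A" for x i
  proof -
    assume a: "x + unitv i \<in> A" "x \<in> X"
    have "x \<le> x + unitv i" by (simp add: le_fun_def)
    then show "x \<in> A" using dcA a XN by blast
  qed
  have s: "(\<Sum>x\<in>X. Pw x * ((if x \<in> A then 1 else 0) / (\<Sum>y\<in>A. Pw y)))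
      = (\<Sum>x\<in>X. (if x \<in> A then Pw x else 0) / (\<Sum>y\<in>A. Pw y))"
    by (rule sum.cong) auto
  also have "\<dots> = (\<Sum>x\<in>X. (if x \<in> A then Pw x else 0)) / (\<Sum>y\<in>A. Pw y)"
    by (simp add: sum_divide_distrib)
  also have "\<dots> = 1" using P assms(1,4) sum.inter_restrict[OF assms(1), of Pw A]
    by (simp add: Int_absorb1)
  finally show ?thesis using assms(4) P mon
    unfolding Btilde_def GammaA_def by (auto simp: divide_right_mono)
qed

lemma convex_B: "convex (Btilde n X Pw)"
  unfolding convex_def
proof (intro ballI allI impI)
  fix G H :: "(nat \<Rightarrow> nat) \<Rightarrow> real" and u v :: real
  assume G: "G \<in> Btilde n X Pw" and H: "H \<in> Btilde n X Pw" and uv: "0 \<le> u" "0 \<le> v" "u + v = 1"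
  have sG: "(\<Sum>x\<in>X. Pw x * G x) = 1" and sH: "(\<Sum>x\<in>X. Pw x * H x) = 1"
    using G H by (auto simp: Btilde_def)
  have "(\<Sum>x\<in>X. Pw x * (u * G x + v * H x)) = u * (\<Sum>x\<in>X. Pw x * G x) + v * (\<Sum>x\<in>X. Pw x * H x)"
    by (simp add: sum_distrib_left sum.distrib algebra_simps)
  also have "\<dots> = 1" using sG sH uv by simp
  finally have s: "(\<Sum>x\<in>X. Pw x * (u * G x + v * H x)) = 1" .
  show "u *\<^sub>R G + v *\<^sub>R H \<in> Btilde n X Pw"
    using G H uv s unfolding Btilde_def
    by (auto simp: scaleR_fun_apply intro!: add_mono mult_left_mono)
qed

lemma B_facts:
  assumes "G \<in> Btilde n X Pw"
  shows "\<And>x. x \<notin> X \<Longrightarrow> G x = 0" "\<And>x. 0 \<le> G x"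
    "\<forall>x\<in>X. \<forall>i<n. x + unitv i \<in> X \<longrightarrow> G (x + unitv i) \<le> G x"
    "(\<Sum>x\<in>X. Pw x * G x) = 1"
proof -
  show "\<And>x. x \<notin> X \<Longrightarrow> G x = 0" using assms unfolding Btilde_def by auto
  show "\<And>x. 0 \<le> G x" using assms unfolding Btilde_def by (case_tac "x \<in> X") auto
  show "\<forall>x\<in>X. \<forall>i<n. x + unitv i \<in> X \<longrightarrow> G (x + unitv i) \<le> G x"
    using assms unfolding Btilde_def by auto
  show "(\<Sum>x\<in>X. Pw x * G x) = 1" using assms unfolding Btilde_def by auto
qed

lemma facts_A:
  assumes fX: "finite X" and feX: "ferrers n X" and pw: "\<forall>x\<in>X. Pw x > 0"
    and AX: "A \<subseteq> X" and feA: "ferrers n A" and G: "G \<in> Btilde n X Pw"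
    and Gz: "\<forall>x. x \<notin> A \<longrightarrow> G x = 0"
  shows "G 0 \<ge> 1 / (\<Sum>y\<in>A. Pw y)" "G 0 = 1 / (\<Sum>y\<in>A. Pw y) \<Longrightarrow> G = GammaA Pw A"
proof -
  note BF = B_facts[OF G]
  have finA: "finite A" using fX AX finite_subset by blast
  have A0: "0 \<in> A" using feA by (simp add: ferrers_def)
  have P: "(\<Sum>y\<in>A. Pw y) > 0" using finA A0 pw AX by (intro sum_pos) auto
  have sA: "(\<Sum>x\<in>A. Pw x * G x) = 1"
    using sum.mono_neutral_left[OF fX AX, of "\<lambda>x. Pw x * G x"] Gz BF(4) by auto
  have le: "\<forall>x\<in>A. G x \<le> G 0"
  proof
    fix x assume "x \<in> A"
    then show "G x \<le> G 0" using mono_steps[OF feX BF(3), of x 0] AX A0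
      by (auto simp: le_fun_def zero_fun_def)
  qed
  have "1 \<le> (\<Sum>x\<in>A. Pw x * G 0)" unfolding sA[symmetric]
    using le pw AX by (intro sum_mono mult_left_mono) (auto simp: less_imp_le subset_iff)
  also have "\<dots> = (\<Sum>y\<in>A. Pw y) * G 0" by (simp add: sum_distrib_right)
  finally show g0: "G 0 \<ge> 1 / (\<Sum>y\<in>A. Pw y)" using P by (simp add: divide_le_eq mult.commute)
  assume e: "G 0 = 1 / (\<Sum>y\<in>A. Pw y)"
  define c where "c = 1 / (\<Sum>y\<in>A. Pw y)"
  have "(\<Sum>x\<in>A. Pw x * (c - G x)) = (\<Sum>x\<in>A. Pw x * c) - (\<Sum>x\<in>A. Pw x * G x)"
    by (simp add: right_diff_distrib sum_subtractf)
  also have "(\<Sum>x\<in>A. Pw x * c) = (\<Sum>x\<in>A. Pw x) * c" by (simp add: sum_distrib_right)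
  also have "(\<Sum>x\<in>A. Pw x) * c = 1" using P by (simp add: c_def)
  also have "1 - (\<Sum>x\<in>A. Pw x * G x) = 0" using sA by simp
  finally have z: "(\<Sum>x\<in>A. Pw x * (1 / (\<Sum>y\<in>A. Pw y) - G x)) = 0" unfolding c_def .
  have nn: "\<forall>x\<in>A. 0 \<le> Pw x * (1 / (\<Sum>y\<in>A. Pw y) - G x)"
  proof
    fix x assume x: "x \<in> A"
    then have "0 \<le> Pw x" "0 \<le> 1 / (\<Sum>y\<in>A. Pw y) - G x" using le e pw AX by (auto simp: less_imp_le subset_iff)
    then show "0 \<le> Pw x * (1 / (\<Sum>y\<in>A. Pw y) - G x)" by simp
  qed
  have z0: "\<forall>x\<in>A. Pw x * (1 / (\<Sum>y\<in>A. Pw y) - G x) = 0"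
    using sum_nonneg_eq_0_iff[OF finA, of "\<lambda>x. Pw x * (1 / (\<Sum>y\<in>A. Pw y) - G x)"] nn z by simp
  have "\<forall>x\<in>A. G x = 1 / (\<Sum>y\<in>A. Pw y)"
  proof
    fix x assume x: "x \<in> A"
    then have "Pw x > 0" using pw AX by blast
    moreover have "Pw x * (1 / (\<Sum>y\<in>A. Pw y) - G x) = 0" using z0 x by blast
    ultimately show "G x = 1 / (\<Sum>y\<in>A. Pw y)" by simp
  qed
  then show "G = GammaA Pw A" using Gz by (auto simp: GammaA_def fun_eq_iff)
qed

lemma gamma_extreme:
  assumes fX: "finite X" and feX: "ferrers n X" and pw: "\<forall>x\<in>X. Pw x > 0"
    and AX: "A \<subseteq> X" and feA: "ferrers n A"
  shows "GammaA Pw A extreme_point_of Btilde n X Pw"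
  unfolding extreme_point_of_def
proof (intro conjI ballI)
  show "GammaA Pw A \<in> Btilde n X Pw" using gamma_in assms by blast
  fix a b assume a: "a \<in> Btilde n X Pw" and b: "b \<in> Btilde n X Pw"
  show "GammaA Pw A \<notin> open_segment a b"
  proof
    assume "GammaA Pw A \<in> open_segment a b"
    then obtain u where ab: "a \<noteq> b" and u: "0 < u" "u < 1"
      and eq: "GammaA Pw A = (1 - u) *\<^sub>R a + u *\<^sub>R b"
      by (auto simp: in_segment)
    have pt: "GammaA Pw A x = (1 - u) * a x + u * b x" for x
      using eq by (simp add: scaleR_fun_apply)
    have an: "0 \<le> a x" "0 \<le> b x" for x using B_facts[OF a] B_facts[OF b] by auto
    have Gz: "\<forall>x. x \<notin> A \<longrightarrow> a x = 0 \<and> b x = 0"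
    proof (intro allI impI)
      fix x assume "x \<notin> A"
      then have "(1 - u) * a x + u * b x = 0" using pt[of x] by (simp add: GammaA_def)
      moreover have "0 \<le> (1 - u) * a x" "0 \<le> u * b x" using an u by auto
      ultimately have "(1 - u) * a x = 0" "u * b x = 0" by linarith+
      then show "a x = 0 \<and> b x = 0" using u by auto
    qed
    define c where "c = 1 / (\<Sum>y\<in>A. Pw y)"
    have A0: "0 \<in> A" using feA by (simp add: ferrers_def)
    have ca: "a 0 \<ge> c" using facts_A(1)[OF fX feX pw AX feA a] Gz c_def by blast
    have cb: "b 0 \<ge> c" using facts_A(1)[OF fX feX pw AX feA b] Gz c_def by blast
    have "(1 - u) * a 0 + u * b 0 = c" using pt[of 0] A0 by (simp add: GammaA_def c_def)
    then have "(1 - u) * (a 0 - c) + u * (b 0 - c) = 0" by (simp add: algebra_simps)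
    moreover have "0 \<le> (1 - u) * (a 0 - c)" "0 \<le> u * (b 0 - c)" using ca cb u by auto
    ultimately have "(1 - u) * (a 0 - c) = 0" "u * (b 0 - c) = 0" by linarith+
    then have "a 0 = c" "b 0 = c" using u by auto
    then have "a = GammaA Pw A" "b = GammaA Pw A"
      using facts_A(2)[OF fX feX pw AX feA a] facts_A(2)[OF fX feX pw AX feA b] Gz 
      unfolding c_def by simp_all
    then show False using ab by simp
  qed
qed

lemma decomp:
  assumes fX: "finite X" and feX: "ferrers n X" and pw: "\<forall>x\<in>X. Pw x > 0"
    and G: "G \<in> Btilde n X Pw"
  shows "G \<in> convex hull {GammaA Pw A | A. A \<subseteq> X \<and> ferrers n A}"
proof -
  note BF = B_facts[OF G]
  define S where "S = G ` X \<inter> {0<..}"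
  define nx where "nx v = Max (insert 0 {w\<in>S. w<v})" for v
  define Av where "Av v = {x\<in>X. v \<le> G x}" for v
  have finS: "finite S" using fX by (simp add: S_def)
  have posS: "S \<subseteq> {0<..}" by (auto simp: S_def)
  have XN: "X \<subseteq> Nn n" and dcX: "\<forall>x\<in>X. \<forall>y\<in>Nn n. y \<le> x \<longrightarrow> y \<in> X" and X0: "0 \<in> X"
    using feX by (auto simp: ferrers_def)
  have mono: "\<And>x y. x \<in> X \<Longrightarrow> y \<in> X \<Longrightarrow> y \<le> x \<Longrightarrow> G x \<le> G y"
    using mono_steps[OF feX BF(3)] by blast
  have nxle: "nx v \<le> v" if "v \<in> S" for v
  proof -
    have "finite (insert 0 {w\<in>S. w<v})" using finS by simp
    moreover have "\<forall>a\<in>insert 0 {w\<in>S. w<v}. a \<le> v" using that posS by auto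
    ultimately show ?thesis unfolding nx_def by (subst Max_le_iff) auto
  qed
  have tel: "(\<Sum>v\<in>S. (v - nx v) * (if v \<le> G x then 1 else 0)) = G x" if x: "x \<in> X" for x
  proof (cases "G x > 0")
    case True
    have GS: "G x \<in> S" using True x by (simp add: S_def)
    have "(\<Sum>v\<in>S. (v - nx v) * (if v \<le> G x then 1 else 0)) = (\<Sum>v\<in>S. if v \<le> G x then v - nx v else 0)"
      by (rule sum.cong) auto
    also have "\<dots> = (\<Sum>v\<in>{v\<in>S. v \<le> G x}. v - nx v)" by (rule sum.inter_filter[OF finS, symmetric])
    also have "\<dots> = G x" unfolding nx_def using telescope[OF finS posS GS] .
    finally show ?thesis .
  next
    case False
    then have "G x = 0" using BF(2)[of x] by simp
    moreover have "\<forall>v\<in>S. \<not> v \<le> G x" using posS \<open>G x = 0\<close> by force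
    ultimately show ?thesis by simp
  qed
  have AvH: "Av v \<subseteq> X \<and> ferrers n (Av v)" and AvNE: "Av v \<noteq> {}" if v: "v \<in> S" for v
  proof -
    have "v \<in> G ` X" using v unfolding S_def by (rule IntD1)
    then obtain x0 where x0: "x0 \<in> X" "G x0 = v" by (rule imageE) (rule that, assumption, rule sym)
    have "0 \<le> x0" by (simp add: le_fun_def)
    then have "G x0 \<le> G 0" using mono[OF x0(1) X0] by blast
    then have A0: "0 \<in> Av v" using x0 X0 unfolding Av_def by simp
    have dc: "\<forall>x\<in>Av v. \<forall>y\<in>Nn n. y \<le> x \<longrightarrow> y \<in> Av v"
    proof (intro ballI impI)
      fix x y assume xA: "x \<in> Av v" and yN: "y \<in> Nn n" and yx: "y \<le> x"
      from xA have xX: "x \<in> X" and vx: "v \<le> G x" unfolding Av_def by simp_all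
      have yX: "y \<in> X" using dcX xX yN yx by blast
      have "G x \<le> G y" using mono[OF xX yX yx] .
      then show "y \<in> Av v" using yX vx unfolding Av_def by simp
    qed
    have AX: "Av v \<subseteq> X" unfolding Av_def by (rule subsetI) simp
    then have AN: "Av v \<subseteq> Nn n" using XN by (rule subset_trans)
    show "Av v \<subseteq> X \<and> ferrers n (Av v)" unfolding ferrers_def using AX AN A0 dc by (intro conjI)
    show "Av v \<noteq> {}" using A0 by blast
  qed
  have PApos: "sum Pw (Av v) > 0" if "v \<in> S" for v
  proof -
    have "finite (Av v)" using fX by (simp add: Av_def)
    then show ?thesis using AvNE[OF that] AvH[OF that] pw by (intro sum_pos) auto
  qed
  define a where "a v = (v - nx v) * sum Pw (Av v)" for v
  have eqG: "(\<Sum>v\<in>S. a v *\<^sub>R GammaA Pw (Av v)) = G"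
  proof
    fix x
    have "(\<Sum>v\<in>S. a v *\<^sub>R GammaA Pw (Av v)) x = (\<Sum>v\<in>S. a v * GammaA Pw (Av v) x)"
      by (simp add: sum_fun_apply scaleR_fun_apply)
    also have "\<dots> = (\<Sum>v\<in>S. (v - nx v) * (if x \<in> Av v then 1 else 0))"
    proof (rule sum.cong)
      fix v assume "v \<in> S"
      then show "a v * GammaA Pw (Av v) x = (v - nx v) * (if x \<in> Av v then 1 else 0)"
        using PApos[of v] by (simp add: a_def GammaA_def)
    qed simp
    also have "\<dots> = G x"
    proof (cases "x \<in> X")
      case True
      then show ?thesis using tel[OF True] by (simp add: Av_def)
    next
      case False
      then show ?thesis using BF(1)[OF False] by (simp add: Av_def)
    qed
    finally show "(\<Sum>v\<in>S. a v *\<^sub>R GammaA Pw (Av v)) x = G x" .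
  qed
  have suma: "sum a S = 1"
  proof -
    have "sum a S = (\<Sum>v\<in>S. \<Sum>x\<in>X. (v - nx v) * (if v \<le> G x then Pw x else 0))"
    proof (rule sum.cong)
      fix v assume "v \<in> S"
      have "sum Pw (Av v) = (\<Sum>x\<in>X. if v \<le> G x then Pw x else 0)"
        unfolding Av_def by (rule sum.inter_filter[OF fX])
      then show "a v = (\<Sum>x\<in>X. (v - nx v) * (if v \<le> G x then Pw x else 0))"
        unfolding a_def by (simp only: sum_distrib_left)
    qed (rule refl)
    also have "\<dots> = (\<Sum>x\<in>X. \<Sum>v\<in>S. (v - nx v) * (if v \<le> G x then Pw x else 0))"
      by (rule sum.swap)
    also have "\<dots> = (\<Sum>x\<in>X. Pw x * G x)"
    proof (rule sum.cong)
      fix x assume x: "x \<in> X"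
      have "(\<Sum>v\<in>S. (v - nx v) * (if v \<le> G x then Pw x else 0))
          = (\<Sum>v\<in>S. Pw x * ((v - nx v) * (if v \<le> G x then 1 else 0)))"
        by (rule sum.cong) auto
      also have "\<dots> = Pw x * (\<Sum>v\<in>S. (v - nx v) * (if v \<le> G x then 1 else 0))"
        by (simp only: sum_distrib_left)
      also have "\<dots> = Pw x * G x" using tel[OF x] by simp
      finally show "(\<Sum>v\<in>S. (v - nx v) * (if v \<le> G x then Pw x else 0)) = Pw x * G x" .
    qed (rule refl)
    also have "\<dots> = 1" using BF(4) .
    finally show ?thesis .
  qed
  have "(\<Sum>v\<in>S. a v *\<^sub>R GammaA Pw (Av v)) \<in> convex hull {GammaA Pw A | A. A \<subseteq> X \<and> ferrers n A}"
  proof (rule convex_sum[OF finS convex_convex_hull suma])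
    fix v assume v: "v \<in> S"
    show "0 \<le> a v" using nxle[OF v] PApos[OF v] by (simp add: a_def)
    show "GammaA Pw (Av v) \<in> convex hull {GammaA Pw A | A. A \<subseteq> X \<and> ferrers n A}"
      using AvH[OF v] by (intro hull_inc) blast
  qed
  then show ?thesis using eqG by simp
qed

theorem mainTheorem9:
  fixes n :: nat and X :: "(nat \<Rightarrow> nat) set" and Pw :: "(nat \<Rightarrow> nat) \<Rightarrow> real"
  assumes "n \<ge> 1"
    and "finite X" and "ferrers n X"
    and "\<forall>x\<in>X. Pw x > 0"
  shows "Btilde n X Pw = convex hull {GammaA Pw A | A. A \<subseteq> X \<and> ferrers n A}
    \<and> (\<forall>A. A \<subseteq> X \<and> ferrers n A \<longrightarrow> GammaA Pw A extreme_point_of Btilde n X Pw)"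
proof (intro conjI allI impI)
  show "Btilde n X Pw = convex hull {GammaA Pw A | A. A \<subseteq> X \<and> ferrers n A}"
  proof
    show "Btilde n X Pw \<subseteq> convex hull {GammaA Pw A | A. A \<subseteq> X \<and> ferrers n A}"
      using decomp assms(2-4) by blast
    show "convex hull {GammaA Pw A | A. A \<subseteq> X \<and> ferrers n A} \<subseteq> Btilde n X Pw"
      by (rule hull_minimal) (use gamma_in assms(2-4) convex_B in auto)
  qed
  fix A assume "A \<subseteq> X \<and> ferrers n A"
  then show "GammaA Pw A extreme_point_of Btilde n X Pw"
    using gamma_extreme assms(2-4) by blast
qed

end
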